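(* Let $K$ be a field, $B$ the algebra of upper triangular $2\times2$ matrices over $K$, and $A=M_3(K)$, with $B$ embedded in $A$ via $\begin{pmatrix}x&y\\0&z\end{pmatrix}\mapsto\begin{pmatrix}x&0&0\\0&x&y\\0&0&z\end{pmatrix}$ (this is left multiplication $B\to\mathrm{End}(B_K)\cong M_3(K)$ in the ordered basis $e_{11},e_{12},e_{22}$). Then ${}_BA$ is free of rank $3$, $A\otimes_BA\cong A^3$ as $A$-$A$-bimodules (so $A\| B$ is H-separable, in particular D2), but $A\| B$ is not a Frobenius extension and there is no $B$-$B$-bimodule projection $A\to B$.
   Context: An algebra extension $A\| B$ is H-separable if $A\otimes_BA$ is isomorphic as an $A$-$A$-bimodule to a direct summand of a finite direct sum $A^n$. It is a Frobenius extension if $A_B$ is finitely generated projective and $A\cong\mathrm{Hom}(A_B,B_B)$ as $B$-$A$-bimodules. It is D2 if $A\otimes_BA$ is isomorphic to a direct summand of some $A^n$ both as $A$-$B$-bimodules and as $B$-$A$-bimodules. *)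

theory Defs
  imports "HOL-Analysis.Analysis"
begin

text \<open>An algebra extension A | B is given by a set Bs of m x m matrices (the algebra B,
  closed under \<open>**\<close>) together with an (injective, unital) algebra map
  \<open>\<iota> : B \<rightarrow> A = M_n(K)\<close>; all module structures of A over B are through \<open>\<iota>\<close>.\<close>

definition ut2 :: "('k::field ^ 2 ^ 2) set" where
  "ut2 = {M. M $ 2 $ 1 = 0}"

definition emb :: "'k::field ^ 2 ^ 2 \<Rightarrow> 'k ^ 3 ^ 3" where
  "emb M = vector [vector [M $ 1 $ 1, 0, 0],
                   vector [0, M $ 1 $ 1, M $ 1 $ 2],
                   vector [0, 0, M $ 2 $ 2]]"

definition left_free_rank ::
  "('k::field ^ 'm ^ 'm) set \<Rightarrow> ('k ^ 'm ^ 'm \<Rightarrow> 'k ^ 'n ^ 'n) \<Rightarrow> nat \<Rightarrow> bool" where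
  "left_free_rank Bs \<iota> n \<longleftrightarrow>
     (\<exists>a :: nat \<Rightarrow> 'k ^ 'n ^ 'n. \<forall>x.
        \<exists>!c :: nat \<Rightarrow> 'k ^ 'm ^ 'm. (\<forall>i<n. c i \<in> Bs) \<and> (\<forall>i\<ge>n. c i = 0) \<and>
              x = (\<Sum>i<n. \<iota> (c i) ** a i))"

text \<open>A \<otimes>_K A is modelled as K^((n x n) x (n x n)), with pure tensors \<open>tens x y\<close>.\<close>
definition tens :: "'k::field ^ 'n ^ 'n \<Rightarrow> 'k ^ 'n ^ 'n \<Rightarrow> 'k ^ (('n \<times> 'n) \<times> ('n \<times> 'n))" where
  "tens x y = (\<chi> pq. x $ fst (fst pq) $ snd (fst pq) * y $ fst (snd pq) $ snd (snd pq))"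

text \<open>The B-balancing relations x b \<otimes> y - x \<otimes> b y; A \<otimes>_B A is the quotient of
  A \<otimes>_K A by their span.\<close>
definition balrel ::
  "('k::field ^ 'm ^ 'm) set \<Rightarrow> ('k ^ 'm ^ 'm \<Rightarrow> 'k ^ 'n ^ 'n) \<Rightarrow> ('k ^ (('n \<times> 'n) \<times> ('n \<times> 'n))) set" where
  "balrel Bs \<iota> = {tens (x ** \<iota> b) y - tens x (\<iota> b ** y) | x y b. b \<in> Bs}"

text \<open>\<open>f\<close> induces an A-A-bimodule isomorphism A \<otimes>_B A \<cong> A^I (componentwise bimodule
  structure on A^I): f is K-linear on A \<otimes>_K A, compatible with the bimodule actions
  a (x \<otimes> y) a' = a x \<otimes> y a', its kernel is exactly the span of the balancing relations,
  and it is surjective.\<close>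
definition tensor_iso_power ::
  "('k::field ^ 'm ^ 'm) set \<Rightarrow> ('k ^ 'm ^ 'm \<Rightarrow> 'k ^ 'n ^ 'n)
     \<Rightarrow> ('i \<Rightarrow> 'k ^ (('n \<times> 'n) \<times> ('n \<times> 'n)) \<Rightarrow> 'k ^ 'n ^ 'n) \<Rightarrow> bool" where
  "tensor_iso_power Bs \<iota> f \<longleftrightarrow>
     (\<forall>i s t. f i (s + t) = f i s + f i t) \<and>
     (\<forall>i c t. f i (c *s t) = mat c ** f i t) \<and>
     (\<forall>i a x y a'. f i (tens (a ** x) (y ** a')) = a ** f i (tens x y) ** a') \<and>
     (\<forall>t. (\<forall>i. f i t = 0) \<longleftrightarrow> t \<in> vec.span (balrel Bs \<iota>)) \<and>
     (\<forall>g. \<exists>t. \<forall>i. f i t = g i)"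

definition right_hom ::
  "('k::field ^ 'm ^ 'm) set \<Rightarrow> ('k ^ 'm ^ 'm \<Rightarrow> 'k ^ 'n ^ 'n) \<Rightarrow> ('k ^ 'n ^ 'n \<Rightarrow> 'k ^ 'm ^ 'm) \<Rightarrow> bool" where
  "right_hom Bs \<iota> \<phi> \<longleftrightarrow>
     (\<forall>x. \<phi> x \<in> Bs) \<and> (\<forall>x y. \<phi> (x + y) = \<phi> x + \<phi> y) \<and>
     (\<forall>x b. b \<in> Bs \<longrightarrow> \<phi> (x ** \<iota> b) = \<phi> x ** b)"

text \<open>A_B finitely generated projective: A_B is a direct summand (retract) of B^n, written
  with the retraction B^n \<rightarrow> A, (v_i) \<mapsto> \<Sum> a_i v_i, and the section x \<mapsto> (\<phi>_i x),
  with each \<phi>_i right B-linear.\<close>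
definition right_fgp ::
  "('k::field ^ 'm ^ 'm) set \<Rightarrow> ('k ^ 'm ^ 'm \<Rightarrow> 'k ^ 'n ^ 'n) \<Rightarrow> bool" where
  "right_fgp Bs \<iota> \<longleftrightarrow>
     (\<exists>n (a :: nat \<Rightarrow> 'k ^ 'n ^ 'n) (\<phi> :: nat \<Rightarrow> 'k ^ 'n ^ 'n \<Rightarrow> 'k ^ 'm ^ 'm).
        (\<forall>i<n. right_hom Bs \<iota> (\<phi> i)) \<and>
        (\<forall>x. x = (\<Sum>i<n. a i ** \<iota> (\<phi> i x))))"

text \<open>Frobenius extension: A_B f.g. projective and A \<cong> Hom(A_B, B_B) as B-A-bimodules,
  where (b \<phi> a)(x) = b \<phi>(a x).\<close>
definition frobenius_ext ::
  "('k::field ^ 'm ^ 'm) set \<Rightarrow> ('k ^ 'm ^ 'm \<Rightarrow> 'k ^ 'n ^ 'n) \<Rightarrow> bool" where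
  "frobenius_ext Bs \<iota> \<longleftrightarrow>
     right_fgp Bs \<iota> \<and>
     (\<exists>\<Phi> :: 'k ^ 'n ^ 'n \<Rightarrow> ('k ^ 'n ^ 'n \<Rightarrow> 'k ^ 'm ^ 'm).
        bij_betw \<Phi> UNIV {\<phi>. right_hom Bs \<iota> \<phi>} \<and>
        (\<forall>a a'. \<Phi> (a + a') = (\<lambda>x. \<Phi> a x + \<Phi> a' x)) \<and>
        (\<forall>b a a'. b \<in> Bs \<longrightarrow> \<Phi> (\<iota> b ** a ** a') = (\<lambda>x. b ** \<Phi> a (a' ** x))))"

definition bimod_projection ::
  "('k::field ^ 'm ^ 'm) set \<Rightarrow> ('k ^ 'm ^ 'm \<Rightarrow> 'k ^ 'n ^ 'n) \<Rightarrow> ('k ^ 'n ^ 'n \<Rightarrow> 'k ^ 'm ^ 'm) \<Rightarrow> bool" where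
  "bimod_projection Bs \<iota> E \<longleftrightarrow>
     (\<forall>x. E x \<in> Bs) \<and> (\<forall>x y. E (x + y) = E x + E y) \<and>
     (\<forall>b b' x. b \<in> Bs \<longrightarrow> b' \<in> Bs \<longrightarrow> E (\<iota> b ** x ** \<iota> b') = b ** E x ** b') \<and>
     (\<forall>b \<in> Bs. E (\<iota> b) = b)"

end

theory Submission
  imports Defs
begin

definition mu :: "'n::finite \<Rightarrow> 'n \<Rightarrow> 'k::field^'n^'n" where
  "mu i j = (\<chi> p q. if p = i \<and> q = j then 1 else 0)"

lemma emb_nth: "emb M $ i $ j =
  (if i = 1 \<and> j = 1 then M$1$1 else if i = 2 \<and> j = 2 then M$1$1 else
   if i = 2 \<and> j = 3 then M$1$2 else if i = 3 \<and> j = 3 then M$2$2 else 0)"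
  using exhaust_3[of i] exhaust_3[of j] by (auto simp: emb_def)

lemmas msimps = vec_eq_iff forall_3 forall_2 matrix_matrix_mult_def sum_3 sum_2 emb_nth mu_def

lemma noproj: "\<not> (\<exists>E. bimod_projection (ut2 :: ('k::field ^ 2 ^ 2) set) (emb :: 'k ^ 2 ^ 2 \<Rightarrow> 'k ^ 3 ^ 3) E)"
proof
  assume "\<exists>E. bimod_projection (ut2 :: ('k::field ^ 2 ^ 2) set) (emb :: 'k ^ 2 ^ 2 \<Rightarrow> 'k ^ 3 ^ 3) E"
  then obtain E where E: "bimod_projection (ut2 :: ('k::field ^ 2 ^ 2) set) (emb :: 'k ^ 2 ^ 2 \<Rightarrow> 'k ^ 3 ^ 3) E" by blast
  have in11: "(mu 1 1 :: 'k^2^2) \<in> ut2" and in12: "(mu 1 2 :: 'k^2^2) \<in> ut2"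
    by (auto simp: ut2_def mu_def)
  have e1: "E (emb (mu 1 2)) = (mu 1 2 :: 'k^2^2)" using E in12 unfolding bimod_projection_def by blast
  have m1: "emb (mu 1 2 :: 'k^2^2) = emb (mu 1 1 :: 'k^2^2) ** (mu 2 2 :: 'k^3^3) ** emb (mu 1 2 :: 'k^2^2)"
    by (simp add: msimps)
  have m2: "(mu 2 2 :: 'k^3^3) = emb (mu 1 2 :: 'k^2^2) ** (mu 3 2 :: 'k^3^3) ** emb (mu 1 1 :: 'k^2^2)"
    by (simp add: msimps)
  have e2: "E (emb (mu 1 2)) = mu 1 1 ** E (mu 2 2) ** mu 1 2"
    using E in11 in12 m1 unfolding bimod_projection_def by metis
  have e3: "E (mu 2 2) = mu 1 2 ** E (mu 3 2) ** mu 1 1"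
    using E in11 in12 m2 unfolding bimod_projection_def by metis
  have w: "E (mu 3 2) $ 2 $ 1 = 0" using E unfolding bimod_projection_def ut2_def by blast
  have "(mu 1 2 :: 'k^2^2) = mu 1 1 ** (mu 1 2 ** E (mu 3 2) ** mu 1 1) ** mu 1 2"
    using e1 e2 e3 by simp
  then have "(mu 1 2 :: 'k^2^2) $ 1 $ 2 = (mu 1 1 ** (mu 1 2 ** E (mu 3 2) ** mu 1 1) ** mu 1 2) $ 1 $ 2"
    by simp
  then show False using w by (simp add: msimps)
qed

lemma mrz: "(A::'k::field^'n^'m) ** (0::'k^'p^'n) = 0"
  by (simp add: vec_eq_iff matrix_matrix_mult_def)

lemma rh_zero:
  assumes "right_hom (ut2 :: ('k::field ^ 2 ^ 2) set) (emb :: 'k ^ 2 ^ 2 \<Rightarrow> 'k ^ 3 ^ 3) \<phi>"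
  shows "\<phi> (mu 1 1) = 0"
proof -
  have z: "\<phi> 0 = 0" using assms unfolding right_hom_def by (metis add_0 add_left_imp_eq add.right_neutral)
  have in22: "(mu 2 2 :: 'k^2^2) \<in> ut2" and in12: "(mu 1 2 :: 'k^2^2) \<in> ut2"
    by (auto simp: ut2_def mu_def)
  have a: "(mu 1 1 :: 'k^3^3) ** emb (mu 2 2 :: 'k^2^2) = 0" "(mu 1 1 :: 'k^3^3) ** emb (mu 1 2 :: 'k^2^2) = 0"
    by (simp_all add: msimps)
  have b: "\<phi> (mu 1 1) ** mu 2 2 = 0" "\<phi> (mu 1 1) ** mu 1 2 = 0"
    using assms in22 in12 a z unfolding right_hom_def by metis+
  have c: "\<phi> (mu 1 1) $ 2 $ 1 = 0" using assms unfolding right_hom_def ut2_def by blast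
  from b c show ?thesis by (simp add: msimps)
qed

lemma nofgp: "\<not> right_fgp (ut2 :: ('k::field ^ 2 ^ 2) set) (emb :: 'k ^ 2 ^ 2 \<Rightarrow> 'k ^ 3 ^ 3)"
proof
  assume "right_fgp (ut2 :: ('k::field ^ 2 ^ 2) set) (emb :: 'k ^ 2 ^ 2 \<Rightarrow> 'k ^ 3 ^ 3)"
  then obtain n and a :: "nat \<Rightarrow> 'k^3^3" and \<phi> :: "nat \<Rightarrow> 'k^3^3 \<Rightarrow> 'k^2^2" where
    h: "\<forall>i<n. right_hom ut2 emb (\<phi> i)" "\<forall>x. x = (\<Sum>i<n. a i ** emb (\<phi> i x))"
    unfolding right_fgp_def by blast
  have e0: "emb (0::'k^2^2) = (0::'k^3^3)" by (simp add: msimps)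
  have "(mu 1 1 :: 'k^3^3) = (\<Sum>i<n. a i ** emb (\<phi> i (mu 1 1)))" using h by blast
  also have "\<dots> = (\<Sum>i<n. (0::'k^3^3))"
  proof (rule sum.cong)
    fix i assume "i \<in> {..<n}"
    then have "\<phi> i (mu 1 1) = 0" using h(1) rh_zero by blast
    then show "a i ** emb (\<phi> i (mu 1 1)) = 0" by (simp add: e0 mrz)
  qed simp
  also have "\<dots> = 0" by simp
  finally have "(mu 1 1 :: 'k^3^3) $ 1 $ 1 = 0" by simp
  then show False by (simp add: mu_def)
qed

definition col :: "nat \<Rightarrow> 3" where "col i = (if i = 0 then 1 else if i = 1 then 2 else 3)"
definition abas :: "nat \<Rightarrow> 'k::field^3^3" where
  "abas i = (\<chi> p q. if p \<noteq> 2 \<and> q = col i then 1 else 0)"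
definition cv :: "'k::field^2^2 \<Rightarrow> 3 \<Rightarrow> 'k" where
  "cv M p = (if p = 1 then M$1$1 else if p = 2 then M$1$2 else M$2$2)"

lemma sum_eq: "(\<Sum>i<3. emb (c i) ** (abas i :: 'k::field^3^3)) =
   (\<chi> p q. if q = 1 then cv (c 0) p else if q = 2 then cv (c 1) p else cv (c 2) p)"
  by (simp add: numeral_3_eq_3 numeral_2_eq_2 msimps abas_def col_def cv_def)

lemma free: "left_free_rank (ut2 :: ('k::field ^ 2 ^ 2) set) emb 3"
  unfolding left_free_rank_def
proof (intro exI allI)
  fix x :: "'k^3^3"
  define c :: "nat \<Rightarrow> 'k^2^2" where "c i = (if i < 3 then (\<chi> r s. if r = 1 \<and> s = 1 then x$1$(col i)
     else if r = 1 \<and> s = 2 then x$2$(col i) else if r = 2 \<and> s = 2 then x$3$(col i) else 0) else 0)" for i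
  let ?P = "\<lambda>c::nat \<Rightarrow> 'k^2^2. (\<forall>i<3. c i \<in> ut2) \<and> (\<forall>i\<ge>3. c i = 0) \<and> x = (\<Sum>i<3. emb (c i) ** abas i)"
  show "\<exists>!c. ?P c"
  proof (rule ex1I[of _ c])
    show "?P c"
      unfolding sum_eq by (auto simp: c_def ut2_def vec_eq_iff forall_3 cv_def col_def)
  next
    fix d assume d: "?P d"
    show "d = c"
    proof
      fix i
      show "d i = c i"
      proof (cases "i < 3")
        case True
        have u: "d i $ 2 $ 1 = 0" using d True by (auto simp: ut2_def)
        have xe: "x $ p $ col i = cv (d i) p" for p
          using d True unfolding sum_eq 
          by (auto simp: col_def numeral_3_eq_3 numeral_2_eq_2 less_Suc_eq)
        show ?thesis using True u xe[of 1] xe[of 2] xe[of 3]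
          by (simp add: c_def vec_eq_iff forall_2 cv_def)
      next
        case False
        then show ?thesis using d by (simp add: c_def)
      qed
    qed
  qed
qed

definition fm :: "3 \<Rightarrow> 'k::field ^ ((3 \<times> 3) \<times> (3 \<times> 3)) \<Rightarrow> 'k ^ 3 ^ 3" where
  "fm i t = (\<chi> a b. if i = 1 then t$((a,1),(1,b)) else if i = 2 then t$((a,2),(1,b))
      else t$((a,2),(2,b)) + t$((a,3),(3,b)))"

definition Mi :: "3 \<Rightarrow> 'k::field^3^3" where
  "Mi i = (if i = 1 then mu 1 1 else if i = 2 then mu 2 1 else mu 2 2 + mu 3 3)"

lemma fm_tens: "fm i (tens x y) = x ** Mi i ** y"
  using exhaust_3[of i] by (auto simp: fm_def Mi_def tens_def msimps)

lemma emb_comm: "emb b ** Mi i = Mi i ** emb b"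
  using exhaust_3[of i] by (auto simp: Mi_def msimps)

lemma fm_add: "fm i (s + t) = fm i s + fm i t"
  by (simp add: fm_def vec_eq_iff)

lemma fm_diff: "fm i (s - t) = fm i s - fm i t"
  by (simp add: fm_def vec_eq_iff)

lemma fm_scale: "fm i (c *s t) = mat c ** fm i t"
  by (simp add: fm_def msimps mat_def algebra_simps)

lemma fm_zero: "fm i 0 = 0"
  by (simp add: fm_def vec_eq_iff)

lemma ker1:
  assumes "t \<in> vec.span (balrel (ut2 :: ('k::field ^ 2 ^ 2) set) emb)"
  shows "\<forall>i. fm i t = (0::'k^3^3)"
  using assms
proof (induct rule: vec.span_induct)
  case base
  show ?case by (rule vec.subspaceI) (auto simp: fm_add fm_scale fm_zero mrz)
next
  case (step x)
  then obtain u y b where x: "x = tens (u ** emb b) y - tens u (emb b ** y)" unfolding balrel_def by blast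
  show ?case unfolding x fm_diff fm_tens
    by (simp add: matrix_mul_assoc[symmetric] emb_comm)
qed

lemma fm_surj: "\<exists>t. \<forall>i. fm i t = (g i :: 'k::field^3^3)"
proof
  let ?t = "(\<chi> k. if snd (fst k) = 1 \<and> fst (snd k) = 1 then g 1 $ fst (fst k) $ snd (snd k)
     else if snd (fst k) = 2 \<and> fst (snd k) = 1 then g 2 $ fst (fst k) $ snd (snd k)
     else if snd (fst k) = 2 \<and> fst (snd k) = 2 then g 3 $ fst (fst k) $ snd (snd k) else 0)
     :: 'k ^ ((3 \<times> 3) \<times> (3 \<times> 3))"
  show "\<forall>i. fm i ?t = g i"
  proof
    fix i :: 3
    show "fm i ?t = g i" using exhaust_3[of i] by (auto simp: fm_def vec_eq_iff)
  qed
qed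

abbreviation W where "W \<equiv> vec.span (balrel (ut2 :: ('k::field ^ 2 ^ 2) set) (emb :: 'k ^ 2 ^ 2 \<Rightarrow> 'k ^ 3 ^ 3))"

lemma bal_in: "c \<in> ut2 \<Longrightarrow> tens (x ** emb c) y - tens x (emb c ** y) \<in> W"
  by (rule vec.span_base) (auto simp: balrel_def)

lemma tens_mu: "tens (mu a q) (mu r b) = (axis ((a,q),(r,b)) 1 :: 'k::field ^ ((3 \<times> 3) \<times> (3 \<times> 3)))"
  by (auto simp: tens_def mu_def axis_def vec_eq_iff)

lemma tens_0: "tens x 0 = 0" "tens 0 y = 0"
  by (auto simp: tens_def vec_eq_iff)

lemma mu_emb:
  "mu a q ** emb (mu 1 1) = (if q = 3 then 0 else (mu a q :: 'k::field^3^3))"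
  "emb (mu 1 1) ** mu r b = (if r = 3 then 0 else (mu r b :: 'k::field^3^3))"
  "mu a q ** emb (mu 2 2) = (if q = 3 then (mu a q :: 'k::field^3^3) else 0)"
  "emb (mu 2 2) ** mu r b = (if r = 3 then (mu r b :: 'k::field^3^3) else 0)"
  "mu a q ** emb (mu 1 2) = (if q = 2 then (mu a 3 :: 'k::field^3^3) else 0)"
  "emb (mu 1 2) ** mu r b = (if r = 3 then (mu 2 b :: 'k::field^3^3) else 0)"
  using exhaust_3[of q] exhaust_3[of r] by (auto simp: msimps)

lemma mu_ut2: "(mu 1 1 :: 'k::field^2^2) \<in> ut2" "(mu 2 2 :: 'k::field^2^2) \<in> ut2" "(mu 1 2 :: 'k::field^2^2) \<in> ut2"
  by (auto simp: ut2_def mu_def)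

lemma ek_in:
  assumes "(q = 1 \<or> q = 2) \<and> r = 3 \<or> q = 3 \<and> (r = 1 \<or> r = 2) \<or> q = 1 \<and> r = 2"
  shows "(axis ((a,q),(r,b)) 1 :: 'k::field ^ ((3 \<times> 3) \<times> (3 \<times> 3))) \<in> W"
  using assms
proof (elim disjE)
  assume h: "(q = 1 \<or> q = 2) \<and> r = 3"
  have "tens (mu a q ** emb (mu 1 1)) (mu r b) - tens (mu a q) (emb (mu 1 1) ** mu r b) \<in> W"
    by (rule bal_in[OF mu_ut2(1)])
  then show ?thesis using h by (auto simp: mu_emb tens_0 tens_mu)
next
  assume h: "q = 3 \<and> (r = 1 \<or> r = 2)"
  have "tens (mu a q ** emb (mu 2 2)) (mu r b) - tens (mu a q) (emb (mu 2 2) ** mu r b) \<in> W"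
    by (rule bal_in[OF mu_ut2(2)])
  then show ?thesis using h by (auto simp: mu_emb tens_0 tens_mu)
next
  assume h: "q = 1 \<and> r = 2"
  have "tens (mu a q ** emb (mu 1 2)) (mu 3 b) - tens (mu a q) (emb (mu 1 2) ** mu 3 b) \<in> W"
    by (rule bal_in[OF mu_ut2(3)])
  then have "- (axis ((a,q),(r,b)) 1 :: 'k::field ^ ((3 \<times> 3) \<times> (3 \<times> 3))) \<in> W"
    using h by (auto simp: mu_emb tens_0 tens_mu)
  then show ?thesis using vec.span_neg by fastforce
qed

lemma d_in: "(axis ((a,3),(3,b)) 1 - axis ((a,2),(2,b)) 1 :: 'k::field ^ ((3 \<times> 3) \<times> (3 \<times> 3))) \<in> W"
proof -
  have "tens (mu a 2 ** emb (mu 1 2)) (mu 3 b) - tens (mu a 2) (emb (mu 1 2) ** mu 3 b) \<in> W"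
    by (rule bal_in[OF mu_ut2(3)])
  then show ?thesis by (auto simp: mu_emb tens_0 tens_mu)
qed

definition nz :: "(3 \<times> 3) \<times> (3 \<times> 3) \<Rightarrow> bool" where
  "nz k \<longleftrightarrow> \<not> ((snd (fst k) = 1 \<and> fst (snd k) = 1) \<or> (snd (fst k) = 2 \<and> fst (snd k) = 1) \<or> (snd (fst k) = 2 \<and> fst (snd k) = 2))"
definition is22 :: "(3 \<times> 3) \<times> (3 \<times> 3) \<Rightarrow> bool" where
  "is22 k \<longleftrightarrow> snd (fst k) = 2 \<and> fst (snd k) = 2"
definition sh :: "(3 \<times> 3) \<times> (3 \<times> 3) \<Rightarrow> (3 \<times> 3) \<times> (3 \<times> 3)" where
  "sh k = ((fst (fst k), 3), (3, snd (snd k)))"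
definition hb :: "(3 \<times> 3) \<times> (3 \<times> 3) \<Rightarrow> 'k::field ^ ((3 \<times> 3) \<times> (3 \<times> 3))" where
  "hb k = (if \<not> nz k then 0 else if snd (fst k) = 3 \<and> fst (snd k) = 3
     then axis k 1 - axis ((fst (fst k), 2), (2, snd (snd k))) 1 else axis k 1)"

lemma nz_sh: "nz (sh k)"
  by (simp add: nz_def sh_def)

lemma hb_nth: "(hb k :: 'k::field ^ ((3 \<times> 3) \<times> (3 \<times> 3))) $ k' =
   (if k = k' \<and> nz k' then 1 else 0) - (if k = sh k' \<and> is22 k' then 1 else 0)"
proof -
  obtain a q r b where k: "k = ((a,q),(r,b))" by (metis prod.collapse)
  obtain a' q' r' b' where k': "k' = ((a',q'),(r',b'))" by (metis prod.collapse)
  show ?thesis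
  proof (cases "nz k")
    case False
    have "\<not> (k = sh k')" using False nz_sh by metis
    moreover have "\<not> (k = k' \<and> nz k')" using False by blast
    ultimately show ?thesis using False by (simp add: hb_def)
  next
    case True
    show ?thesis
    proof (cases "q = 3 \<and> r = 3")
      case T33: True
      have "(hb k :: 'k ^ ((3 \<times> 3) \<times> (3 \<times> 3))) = axis k 1 - axis ((a, 2), (2, b)) 1" using True T33 by (simp add: hb_def k)
      moreover have ne: "k \<noteq> ((a, 2), (2, b))" using T33 k by auto
      ultimately have l: "(hb k :: 'k ^ ((3 \<times> 3) \<times> (3 \<times> 3))) $ k' = (if k' = k then 1 else 0) - (if k' = ((a, 2), (2, b)) then 1 else 0)"
        by (simp add: axis_def)
      have "(k = sh k' \<and> is22 k') \<longleftrightarrow> k' = ((a, 2), (2, b))"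
        using T33 unfolding k k' sh_def is22_def by auto
      moreover have "(k = k' \<and> nz k') \<longleftrightarrow> k' = k" using True by auto
      ultimately show ?thesis using l by simp
    next
      case F33: False
      have "(hb k :: 'k ^ ((3 \<times> 3) \<times> (3 \<times> 3))) = axis k 1" using True F33 by (simp add: hb_def k)
      then have l: "(hb k :: 'k ^ ((3 \<times> 3) \<times> (3 \<times> 3))) $ k' = (if k' = k then 1 else 0)"
        by (simp add: axis_def)
      have "\<not> (k = sh k')"
        using F33 unfolding k k' sh_def by auto
      moreover have "(k = k' \<and> nz k') \<longleftrightarrow> k' = k" using True by auto
      ultimately show ?thesis using l by auto
    qed
  qed
qed

lemma hb_in: "(hb k :: 'k::field ^ ((3 \<times> 3) \<times> (3 \<times> 3))) \<in> W"
proof -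
  obtain a q r b where k: "k = ((a,q),(r,b))" by (metis prod.collapse)
  have c: "(q = 1 \<or> q = 2) \<and> r = 3 \<or> q = 3 \<and> (r = 1 \<or> r = 2) \<or> q = 1 \<and> r = 2"
    if "nz k" "\<not> (q = 3 \<and> r = 3)"
    using that exhaust_3[of q] exhaust_3[of r] unfolding k nz_def by auto
  show ?thesis
  proof (cases "nz k")
    case False then show ?thesis by (simp add: hb_def vec.span_zero)
  next
    case True
    show ?thesis
    proof (cases "q = 3 \<and> r = 3")
      case True
      have "(hb k :: 'k ^ ((3 \<times> 3) \<times> (3 \<times> 3))) = axis ((a,3),(3,b)) 1 - axis ((a,2),(2,b)) 1"
        using \<open>nz k\<close> True unfolding k hb_def by auto
      then show ?thesis using d_in by simp
    next
      case False
      have "(hb k :: 'k ^ ((3 \<times> 3) \<times> (3 \<times> 3))) = axis k 1" using \<open>nz k\<close> False unfolding k hb_def by auto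
      then show ?thesis using ek_in[OF c[OF \<open>nz k\<close> False]] unfolding k by simp
    qed
  qed
qed

lemma ker2:
  assumes "\<forall>i. fm i t = (0::'k::field^3^3)"
  shows "t \<in> W"
proof -
  have z1: "t$((a,1),(1,b)) = 0" and z2: "t$((a,2),(1,b)) = 0" and z3: "t$((a,2),(2,b)) = - t$((a,3),(3,b))" for a b
  proof -
    have "fm 1 t $ a $ b = 0" "fm 2 t $ a $ b = 0" "fm 3 t $ a $ b = 0" using assms by auto
    then show "t$((a,1),(1,b)) = 0" "t$((a,2),(1,b)) = 0" "t$((a,2),(2,b)) = - t$((a,3),(3,b))"
      by (auto simp: fm_def eq_neg_iff_add_eq_0)
  qed
  have "t = (\<Sum>k\<in>UNIV. t$k *s hb k)"
  proof (subst vec_eq_iff, rule allI)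
    fix k' :: "(3 \<times> 3) \<times> (3 \<times> 3)"
    have "(\<Sum>k\<in>UNIV. t$k *s hb k) $ k' = (\<Sum>k\<in>UNIV. (if k = k' then (if nz k' then t$k' else 0) else 0)
         - (if k = sh k' then (if is22 k' then t$(sh k') else 0) else 0))"
      unfolding sum_component by (rule sum.cong) (auto simp: hb_nth)
    also have "\<dots> = (if nz k' then t$k' else 0) - (if is22 k' then t$(sh k') else 0)"
      by (simp add: sum_subtractf)
    also have "\<dots> = t $ k'"
    proof -
      obtain a q r b where k: "k' = ((a,q),(r,b))" by (metis prod.collapse)
      show ?thesis unfolding k using exhaust_3[of q] exhaust_3[of r] z1 z2 z3
        by (auto simp: nz_def is22_def sh_def)
    qed
    finally show "t $ k' = (\<Sum>k\<in>UNIV. t$k *s hb k) $ k'" by simp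
  qed
  also have "\<dots> \<in> W"
    by (intro vec.span_sum vec.span_scale hb_in)
  finally show ?thesis .
qed

lemma tiso: "tensor_iso_power (ut2 :: ('k::field ^ 2 ^ 2) set) emb (fm :: 3 \<Rightarrow> _ \<Rightarrow> 'k^3^3)"
  unfolding tensor_iso_power_def
proof (intro conjI allI)
  fix i a x y a'
  show "fm i (tens (a ** x) (y ** a')) = a ** fm i (tens x y) ** (a' :: 'k^3^3)"
    by (simp add: fm_tens matrix_mul_assoc)
next
  fix t :: "'k ^ ((3 \<times> 3) \<times> (3 \<times> 3))"
  show "(\<forall>i. fm i t = 0) \<longleftrightarrow> t \<in> W" using ker1[of t] ker2[of t] by blast
qed (auto simp: fm_add fm_scale fm_surj)

theorem mainTheorem12:
  shows "left_free_rank (ut2 :: ('k::field ^ 2 ^ 2) set) emb 3 \<and>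
         (\<exists>f :: 3 \<Rightarrow> 'k ^ ((3 \<times> 3) \<times> (3 \<times> 3)) \<Rightarrow> 'k ^ 3 ^ 3.
             tensor_iso_power (ut2 :: ('k ^ 2 ^ 2) set) emb f) \<and>
         \<not> frobenius_ext (ut2 :: ('k ^ 2 ^ 2) set) (emb :: 'k ^ 2 ^ 2 \<Rightarrow> 'k ^ 3 ^ 3) \<and>
         \<not> (\<exists>E. bimod_projection (ut2 :: ('k ^ 2 ^ 2) set) (emb :: 'k ^ 2 ^ 2 \<Rightarrow> 'k ^ 3 ^ 3) E)"
  using free tiso nofgp noproj unfolding frobenius_ext_def by blast

end
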